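(* Let $x\ge1$ be an integer and $u,v\in\mathbf{C}$ with $\Re u>1$ and $\Re v>1$. Then \[ J_x(u,v)=\frac{x^{1-u-v}}{u+v-1}+\int_x^\infty\alpha^{-u}\zeta_1(v,\alpha)\,d\alpha+\int_x^\infty\alpha^{-v}\zeta_1(u,\alpha)\,d\alpha, \] with both integrals absolutely convergent.
   Context: For an integer $x\geq 0$, $\alpha>0$ and $\Re s>1$, $\zeta_x(s,\alpha)=\sum_{n\geq x}(n+\alpha)^{-s}$. $J_x(u,v)=\int_0^1\zeta_x(u,\alpha)\zeta_x(v,\alpha)\,d\alpha$. *)

theory Defs
  imports "HOL-Analysis.Analysis"
begin

definition zeta_tail :: "nat \<Rightarrow> complex \<Rightarrow> real \<Rightarrow> complex" where
  "zeta_tail x s \<alpha> = (\<Sum>k. (complex_of_real (real (k + x) + \<alpha>)) powr (- s))"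

definition J_int :: "nat \<Rightarrow> complex \<Rightarrow> complex \<Rightarrow> complex" where
  "J_int x u v = (LINT \<alpha>:{0..1}|lborel. zeta_tail x u \<alpha> * zeta_tail x v \<alpha>)"

end

theory Submission
  imports Defs
begin


definition T :: "complex \<Rightarrow> nat \<Rightarrow> real" where
  "T s n = (\<Sum>k. real (k + n) powr (- Re s))"

lemma summable_T:
  assumes "Re s > 1"
  shows "summable (\<lambda>k. real (k + n) powr (- Re s))"
proof -
  have "summable (\<lambda>k. real k powr (- Re s))"
    using assms by (subst summable_real_powr_iff) auto
  then show ?thesis using summable_iff_shift[of "\<lambda>k. real k powr (- Re s)" n] by simp
qed

lemma norm_term:
  assumes "a > 0"
  shows "norm (complex_of_real a powr (- s)) = a powr (- Re s)"
  using assms by (subst norm_powr_real_powr) auto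

lemma term_bound:
  assumes "n \<ge> 1" "\<alpha> \<ge> 0" "Re s > 1"
  shows "norm (complex_of_real (real (k + n) + \<alpha>) powr (- s)) \<le> real (k + n) powr (- Re s)"
proof -
  have "real (k+n) > 0" using assms by auto
  then show ?thesis using assms
    by (subst norm_term) (auto intro!: powr_mono2')
qed

lemma summable_zeta_terms:
  assumes "n \<ge> 1" "\<alpha> \<ge> 0" "Re s > 1"
  shows "summable (\<lambda>k. norm (complex_of_real (real (k + n) + \<alpha>) powr (- s)))"
  by (rule summable_comparison_test[OF _ summable_T[OF assms(3), of n]])
     (use term_bound[OF assms] in auto)

lemma zeta_bound:
  assumes "n \<ge> 1" "\<alpha> \<ge> 0" "Re s > 1"
  shows "norm (zeta_tail n s \<alpha>) \<le> T s n"
proof -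
  have "norm (zeta_tail n s \<alpha>) \<le> (\<Sum>k. norm (complex_of_real (real (k + n) + \<alpha>) powr (- s)))"
    unfolding zeta_tail_def using summable_zeta_terms[OF assms] by (rule summable_norm)
  also have "\<dots> \<le> T s n" unfolding T_def
    by (rule suminf_le) (use term_bound[OF assms] summable_zeta_terms[OF assms] summable_T[OF assms(3)] in auto)
  finally show ?thesis .
qed

lemma T_tendsto:
  assumes "Re s > 1"
  shows "T s \<longlonglongrightarrow> 0"
proof -
  let ?f = "\<lambda>k. real k powr (- Re s)"
  have sf: "summable ?f" using summable_T[OF assms, of 0] by simp
  have "T s n = suminf ?f - (\<Sum>i<n. ?f i)" for n
    using suminf_split_initial_segment[OF sf, of n] unfolding T_def by simp
  hence eq: "T s = (\<lambda>n. suminf ?f - (\<Sum>i<n. ?f i))" by (rule ext)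
  have "(\<lambda>n. suminf ?f - (\<Sum>i<n. ?f i)) \<longlonglongrightarrow> suminf ?f - suminf ?f"
    by (intro tendsto_intros summable_LIMSEQ sf)
  then show ?thesis unfolding eq by simp
qed

lemma zeta_split:
  assumes "n \<ge> 1" "\<alpha> \<ge> 0" "Re s > 1"
  shows "zeta_tail n s \<alpha> = complex_of_real (real n + \<alpha>) powr (- s) + zeta_tail (Suc n) s \<alpha>"
proof -
  let ?f = "\<lambda>k. complex_of_real (real (k + n) + \<alpha>) powr (- s)"
  have "summable ?f" using summable_zeta_terms[OF assms] by (rule summable_norm_cancel)
  from suminf_split_head[OF this] show ?thesis
    unfolding zeta_tail_def by (simp add: algebra_simps)
qed

lemma zeta_shift:
  "zeta_tail (Suc n) s \<alpha> = zeta_tail 1 s (real n + \<alpha>)"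
  unfolding zeta_tail_def by (simp add: algebra_simps)

lemma zeta_cont:
  assumes "n \<ge> 1" "Re s > 1"
  shows "continuous_on {0..} (zeta_tail n s)"
proof -
  have "uniform_limit {0..} (\<lambda>m \<alpha>. \<Sum>i<m. complex_of_real (real (i + n) + \<alpha>) powr (- s))
          (\<lambda>\<alpha>. \<Sum>i. complex_of_real (real (i + n) + \<alpha>) powr (- s)) sequentially"
    by (rule Weierstrass_m_test[OF _ summable_T[OF assms(2), of n]])
       (use term_bound[OF assms(1) _ assms(2)] in auto)
  moreover have "continuous_on {0..} (\<lambda>\<alpha>. \<Sum>i<m. complex_of_real (real (i + n) + \<alpha>) powr (- s))" for m
    using assms by (intro continuous_intros) (auto simp: complex_eq_iff)
  ultimately show ?thesis unfolding zeta_tail_def[abs_def]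
    by (intro uniform_limit_theorem) auto
qed



lemma powr_set_integrable:
  fixes a \<sigma> :: real
  assumes "a > 0" "\<sigma> > 1"
  shows "set_integrable lborel {a..} (\<lambda>\<beta>. \<beta> powr (- \<sigma>))"
proof -
  have "(\<lambda>\<beta>. \<beta> powr (- \<sigma>)) integrable_on {a..}"
    using has_integral_powr_to_inf[of "-\<sigma>" a] assms by auto
  then have "(\<lambda>\<beta>. \<beta> powr (- \<sigma>)) absolutely_integrable_on {a..}"
    by (rule nonnegative_absolutely_integrable_1) auto
  then have *: "integrable lebesgue (\<lambda>\<beta>. indicator {a..} \<beta> *\<^sub>R \<beta> powr (- \<sigma>))"
    unfolding absolutely_integrable_on_def set_integrable_def .
  have m: "(\<lambda>\<beta>. indicator {a..} \<beta> *\<^sub>R \<beta> powr (- \<sigma>)) \<in> borel_measurable lborel"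
    using assms
    by (auto intro!: borel_measurable_continuous_on_indicator continuous_intros)
  show ?thesis unfolding set_integrable_def
    using integrable_completion[OF m] * by simp
qed

lemma shift_integral:
  fixes f :: "real \<Rightarrow> complex"
  assumes "continuous_on {c..c+1} f"
  shows "(LINT \<alpha>:{0..1}|lborel. f (c + \<alpha>)) = (LINT \<beta>:{c..c+1}|lborel. f \<beta>)"
proof -
  have c1: "continuous_on {0..1} (\<lambda>\<alpha>. f (c + \<alpha>))"
    by (rule continuous_on_compose2[OF assms]) (auto intro!: continuous_intros)
  have "(LINT \<alpha>:{0..1}|lborel. f (c + \<alpha>)) = integral {0..1} (\<lambda>\<alpha>. f (c + \<alpha>))"
    by (rule set_borel_integral_eq_integral(2)[OF borel_integrable_atLeastAtMost'[OF c1]])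
  also have "\<dots> = integral {0+c..1+c} f"
    using integral_shift_Icc_real[of 0 1 f c] by (simp add: o_def)
  also have "\<dots> = (LINT \<beta>:{c..c+1}|lborel. f \<beta>)"
    by (subst set_borel_integral_eq_integral(2)[OF borel_integrable_atLeastAtMost'[OF assms]])
       (simp add: add.commute)
  finally show ?thesis .
qed

lemma powr_FTC:
  fixes w :: complex and c :: real
  assumes "c > 0" "w \<noteq> 1"
  shows "(LINT \<beta>:{c..c+1}|lborel. complex_of_real \<beta> powr (- w)) =
     complex_of_real c powr (1 - w) / (w - 1) - complex_of_real (c+1) powr (1 - w) / (w - 1)"
proof -
  define F where "F = (\<lambda>t::real. complex_of_real t powr (1 - w) / (1 - w))"
  have der: "(F has_vector_derivative complex_of_real t powr (- w)) (at t within {c..c+1})"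
    if "c \<le> t" "t \<le> c + 1" for t
  proof -
    have tpos: "t > 0" using that assms by auto
    have "((\<lambda>z. z powr (1 - w) / (1 - w)) has_field_derivative
             ((1 - w) * complex_of_real t powr (1 - w - 1)) / (1 - w)) (at (complex_of_real t))"
      by (intro derivative_eq_intros has_field_derivative_powr) (use tpos assms in \<open>auto simp: complex_nonpos_Reals_iff\<close>)
    then have "((\<lambda>z. z powr (1 - w) / (1 - w)) has_field_derivative complex_of_real t powr (- w))
                  (at (complex_of_real t))"
      using assms by simp
    then show ?thesis unfolding F_def
      by (rule has_vector_derivative_real_field)
  qed
  have cont: "continuous_on {c..c+1} (\<lambda>t. complex_of_real t powr (- w))"
    using assms by (intro continuous_intros) (auto simp: complex_nonpos_Reals_iff)
  have "(LINT \<beta>:{c..c+1}|lborel. complex_of_real \<beta> powr (- w)) = F (c+1) - F c"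
    unfolding set_lebesgue_integral_def
    by (rule integral_FTC_atLeastAtMost[OF _ der cont]) auto
  also have "\<dots> = complex_of_real c powr (1 - w) / (w - 1) - complex_of_real (c+1) powr (1 - w) / (w - 1)"
    unfolding F_def using assms by (simp add: field_simps)
  finally show ?thesis .
qed



definition g :: "complex \<Rightarrow> complex \<Rightarrow> real \<Rightarrow> complex" where
  "g u v \<beta> = complex_of_real \<beta> powr (- u) * zeta_tail 1 v \<beta>"

lemma g_cont:
  assumes "Re v > 1"
  shows "continuous_on {1..} (g u v)"
proof -
  have "continuous_on {1..} (zeta_tail 1 v)"
    by (rule continuous_on_subset[OF zeta_cont[OF _ assms]]) auto
  then show ?thesis unfolding g_def[abs_def]
    by (intro continuous_intros) (auto simp: complex_nonpos_Reals_iff)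
qed

lemma g_bound:
  assumes "Re v > 1" "\<beta> \<ge> 1"
  shows "norm (g u v \<beta>) \<le> \<beta> powr (- Re u) * T v 1"
proof -
  have "norm (g u v \<beta>) = \<beta> powr (- Re u) * norm (zeta_tail 1 v \<beta>)"
    unfolding g_def norm_mult using assms by (subst norm_term) auto
  also have "\<dots> \<le> \<beta> powr (- Re u) * T v 1"
    by (intro mult_left_mono zeta_bound) (use assms in auto)
  finally show ?thesis .
qed

lemma T_nonneg: "Re s > 1 \<Longrightarrow> T s n \<ge> 0"
  unfolding T_def by (intro suminf_nonneg summable_T) auto

lemma g_meas:
  assumes "Re v > 1" "c \<ge> 1"
  shows "(\<lambda>\<beta>. indicator {c..} \<beta> *\<^sub>R g u v \<beta>) \<in> borel_measurable lborel"
proof -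
  have "continuous_on {c..} (g u v)"
    by (rule continuous_on_subset[OF g_cont[OF assms(1)]]) (use assms in auto)
  then show ?thesis
    by (auto intro!: borel_measurable_continuous_on_indicator)
qed

lemma g_dom_integrable:
  assumes "Re u > 1" "c \<ge> 1"
  shows "integrable lborel (\<lambda>\<beta>. indicator {c..} \<beta> *\<^sub>R (\<beta> powr (- Re u) * K))"
proof -
  have "set_integrable lborel {c..} (\<lambda>\<beta>. \<beta> powr (- Re u))"
    by (rule powr_set_integrable) (use assms in auto)
  then have "integrable lborel (\<lambda>\<beta>. indicator {c..} \<beta> *\<^sub>R \<beta> powr (- Re u))"
    unfolding set_integrable_def .
  then have "integrable lborel (\<lambda>\<beta>. (indicator {c..} \<beta> *\<^sub>R \<beta> powr (- Re u)) * K)"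
    by (rule integrable_mult_left)
  then show ?thesis by (simp add: mult.assoc)
qed

lemma g_integrable:
  assumes "Re u > 1" "Re v > 1" "c \<ge> 1"
  shows "set_integrable lborel {c..} (g u v)"
  unfolding set_integrable_def
proof (rule Bochner_Integration.integrable_bound[OF g_dom_integrable[OF assms(1) assms(3), of "T v 1"] g_meas[OF assms(2,3)]])
  show "AE \<beta> in lborel. norm (indicator {c..} \<beta> *\<^sub>R g u v \<beta>) \<le>
       norm (indicator {c..} \<beta> *\<^sub>R (\<beta> powr - Re u * T v 1))"
  proof (intro AE_I2)
    fix \<beta> :: real
    show "norm (indicator {c..} \<beta> *\<^sub>R g u v \<beta>) \<le> norm (indicator {c..} \<beta> *\<^sub>R (\<beta> powr - Re u * T v 1))"
    proof (cases "\<beta> \<ge> c")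
      case True
      then have "norm (g u v \<beta>) \<le> \<beta> powr (- Re u) * T v 1"
        using g_bound[OF assms(2)] assms(3) by auto
      moreover have "\<beta> powr (- Re u) * T v 1 \<ge> 0" using T_nonneg[OF assms(2)] by simp
      ultimately show ?thesis using True by (simp add: indicator_def)
    qed (simp add: indicator_def)
  qed
qed

lemma g_split:
  assumes "Re u > 1" "Re v > 1" "c \<ge> 1"
  shows "(LINT \<beta>:{c..}|lborel. g u v \<beta>) =
          (LINT \<beta>:{c..c+1}|lborel. g u v \<beta>) + (LINT \<beta>:{c+1..}|lborel. g u v \<beta>)"
proof -
  have "{c..} = {c..c+1} \<union> {c+1..}" by auto
  then have "(LINT \<beta>:{c..}|lborel. g u v \<beta>) = (LINT \<beta>:{c..c+1} \<union> {c+1..}|lborel. g u v \<beta>)"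
    by simp
  also have "\<dots> = (LINT \<beta>:{c..c+1}|lborel. g u v \<beta>) + (LINT \<beta>:{c+1..}|lborel. g u v \<beta>)"
  proof (rule set_integral_Un_AE)
    show "AE x in lborel. \<not> (x \<in> {c..c+1} \<and> x \<in> {c+1..})"
      using AE_lborel_singleton[of "c+1"] by eventually_elim auto
    show "set_integrable lborel {c..c+1} (g u v)"
      by (rule borel_integrable_atLeastAtMost', rule continuous_on_subset[OF g_cont[OF assms(2)]])
         (use assms in auto)
    show "set_integrable lborel {c+1..} (g u v)"
      by (rule g_integrable) (use assms in auto)
  qed auto
  finally show ?thesis .
qed

lemma g_tail_tendsto:
  assumes "Re u > 1" "Re v > 1" "c \<ge> 1"
  shows "(\<lambda>k. LINT \<beta>:{c + real k..}|lborel. g u v \<beta>) \<longlonglongrightarrow> 0"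
proof -
  have "(\<lambda>k. integral\<^sup>L lborel (\<lambda>\<beta>. indicator {c + real k..} \<beta> *\<^sub>R g u v \<beta>)) \<longlonglongrightarrow>
          integral\<^sup>L lborel (\<lambda>\<beta>::real. 0::complex)"
  proof (rule Bochner_Integration.integral_dominated_convergence)
    show "(\<lambda>\<beta>::real. 0::complex) \<in> borel_measurable lborel" by simp
    show "(\<lambda>\<beta>. indicator {c + real k..} \<beta> *\<^sub>R g u v \<beta>) \<in> borel_measurable lborel" for k
      by (rule g_meas) (use assms in auto)
    show "integrable lborel (\<lambda>\<beta>. indicator {c..} \<beta> *\<^sub>R (\<beta> powr (- Re u) * T v 1))"
      by (rule g_dom_integrable) (use assms in auto)
    show "AE \<beta> in lborel. (\<lambda>k. indicator {c + real k..} \<beta> *\<^sub>R g u v \<beta>) \<longlonglongrightarrow> 0"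
    proof (intro AE_I2)
      fix \<beta> :: real
      obtain N :: nat where N: "real N > \<beta> - c" using reals_Archimedean2 by blast
      have "eventually (\<lambda>k. indicator {c + real k..} \<beta> *\<^sub>R g u v \<beta> = 0) sequentially"
        using eventually_ge_at_top[of N]
        by eventually_elim (use N in \<open>auto simp: indicator_def\<close>)
      then show "(\<lambda>k. indicator {c + real k..} \<beta> *\<^sub>R g u v \<beta>) \<longlonglongrightarrow> 0"
        by (rule tendsto_eventually)
    qed
    show "AE \<beta> in lborel. norm (indicator {c + real k..} \<beta> *\<^sub>R g u v \<beta>) \<le>
            indicator {c..} \<beta> *\<^sub>R (\<beta> powr (- Re u) * T v 1)" for k
    proof (intro AE_I2)
      fix \<beta> :: real
      show "norm (indicator {c + real k..} \<beta> *\<^sub>R g u v \<beta>) \<le>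
            indicator {c..} \<beta> *\<^sub>R (\<beta> powr (- Re u) * T v 1)"
      proof (cases "\<beta> \<ge> c + real k")
        case True
        then have "norm (g u v \<beta>) \<le> \<beta> powr (- Re u) * T v 1"
          using g_bound[OF assms(2)] assms(3) by auto
        then show ?thesis using True by (simp add: indicator_def)
      next
        case False
        have "\<beta> powr (- Re u) * T v 1 \<ge> 0" using T_nonneg[OF assms(2)] by simp
        then show ?thesis using False by (simp add: indicator_def)
      qed
    qed
  qed
  then show ?thesis unfolding set_lebesgue_integral_def by simp
qed



definition h :: "complex \<Rightarrow> complex \<Rightarrow> real \<Rightarrow> complex" where
  "h u v \<beta> = complex_of_real \<beta> powr (- (u + v))"

lemma h_cont: "continuous_on {1..} (h u v)"
  unfolding h_def[abs_def] by (intro continuous_intros) (auto simp: complex_nonpos_Reals_iff)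

lemma pointwise:
  assumes "n \<ge> 1" "\<alpha> \<ge> 0" "Re u > 1" "Re v > 1"
  shows "zeta_tail n u \<alpha> * zeta_tail n v \<alpha> =
     (h u v (real n + \<alpha>) + g u v (real n + \<alpha>) + g v u (real n + \<alpha>)) +
     zeta_tail (Suc n) u \<alpha> * zeta_tail (Suc n) v \<alpha>"
proof -
  define a where "a = complex_of_real (real n + \<alpha>) powr (- u)"
  define b where "b = complex_of_real (real n + \<alpha>) powr (- v)"
  define A where "A = zeta_tail (Suc n) u \<alpha>"
  define B where "B = zeta_tail (Suc n) v \<alpha>"
  have 1: "zeta_tail n u \<alpha> = a + A" unfolding a_def A_def by (rule zeta_split) (use assms in auto)
  have 2: "zeta_tail n v \<alpha> = b + B" unfolding b_def B_def by (rule zeta_split) (use assms in auto)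
  have 3: "h u v (real n + \<alpha>) = a * b" unfolding h_def a_def b_def
    by (simp add: powr_add[symmetric] algebra_simps)
  have 4: "g u v (real n + \<alpha>) = a * B" unfolding g_def a_def B_def zeta_shift ..
  have 5: "g v u (real n + \<alpha>) = b * A" unfolding g_def b_def A_def zeta_shift ..
  show ?thesis unfolding 1 2 3 4 5 A_def[symmetric] B_def[symmetric] by (simp add: algebra_simps)
qed

lemma ZZ_cont:
  assumes "n \<ge> 1" "Re u > 1" "Re v > 1"
  shows "continuous_on {0..1} (\<lambda>\<alpha>. zeta_tail n u \<alpha> * zeta_tail n v \<alpha>)"
  by (intro continuous_intros continuous_on_subset[OF zeta_cont[OF assms(1,2)]]
        continuous_on_subset[OF zeta_cont[OF assms(1,3)]]) auto

lemma J_rec: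
  assumes "n \<ge> 1" "Re u > 1" "Re v > 1"
  shows "J_int n u v = (LINT \<beta>:{real n..real n+1}|lborel. h u v \<beta>)
            + (LINT \<beta>:{real n..real n+1}|lborel. g u v \<beta>)
            + (LINT \<beta>:{real n..real n+1}|lborel. g v u \<beta>) + J_int (Suc n) u v"
proof -
  define k where "k = (\<lambda>\<beta>. h u v \<beta> + g u v \<beta> + g v u \<beta>)"
  have kc: "continuous_on {real n..real n+1} k"
    unfolding k_def using assms
    by (intro continuous_intros continuous_on_subset[OF h_cont] continuous_on_subset[OF g_cont]) auto
  have kc': "continuous_on {0..1} (\<lambda>\<alpha>. k (real n + \<alpha>))"
    by (rule continuous_on_compose2[OF kc]) (auto intro!: continuous_intros)
  have "J_int n u v = (LINT \<alpha>:{0..1}|lborel. k (real n + \<alpha>) + zeta_tail (Suc n) u \<alpha> * zeta_tail (Suc n) v \<alpha>)"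
    unfolding J_int_def k_def
    by (rule set_lebesgue_integral_cong) (use pointwise[OF assms(1) _ assms(2,3)] in auto)
  also have "\<dots> = (LINT \<alpha>:{0..1}|lborel. k (real n + \<alpha>)) + J_int (Suc n) u v"
    unfolding J_int_def
    by (rule set_integral_add(2) borel_integrable_atLeastAtMost' kc' ZZ_cont)+ (use assms in auto)
  also have "(LINT \<alpha>:{0..1}|lborel. k (real n + \<alpha>)) = (LINT \<beta>:{real n..real n+1}|lborel. k \<beta>)"
    by (rule shift_integral[OF kc])
  also have "\<dots> = (LINT \<beta>:{real n..real n+1}|lborel. h u v \<beta>)
            + (LINT \<beta>:{real n..real n+1}|lborel. g u v \<beta>)
            + (LINT \<beta>:{real n..real n+1}|lborel. g v u \<beta>)"
    unfolding k_def using assms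
    by (subst set_integral_add(2), (intro set_integral_add(1) borel_integrable_atLeastAtMost'
          continuous_on_subset[OF h_cont] continuous_on_subset[OF g_cont]; auto)+)
       (subst set_integral_add(2), (intro set_integral_add(1) borel_integrable_atLeastAtMost'
          continuous_on_subset[OF h_cont] continuous_on_subset[OF g_cont]; auto)+, simp)
  finally show ?thesis .
qed

lemma J_bound:
  assumes "n \<ge> 1" "Re u > 1" "Re v > 1"
  shows "norm (J_int n u v) \<le> T u n * T v n"
proof -
  have c: "continuous_on {0..1} (\<lambda>\<alpha>. zeta_tail n u \<alpha> * zeta_tail n v \<alpha>)"
    by (rule ZZ_cont[OF assms])
  have "norm (J_int n u v) \<le> (LINT \<alpha>:{0..1}|lborel. norm (zeta_tail n u \<alpha> * zeta_tail n v \<alpha>))"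
    unfolding J_int_def by (rule set_integral_norm_bound borel_integrable_atLeastAtMost' c)+
  also have "\<dots> \<le> (LINT \<alpha>::real:{0..1}|lborel. T u n * T v n)"
  proof (rule set_integral_mono)
    show "set_integrable lborel {0..1} (\<lambda>\<alpha>. norm (zeta_tail n u \<alpha> * zeta_tail n v \<alpha>))"
      by (intro borel_integrable_atLeastAtMost' continuous_intros c)
    show "set_integrable lborel {0..1} (\<lambda>\<alpha>::real. T u n * T v n)"
      by (intro borel_integrable_atLeastAtMost' continuous_intros)
    fix \<alpha> :: real assume "\<alpha> \<in> {0..1}"
    then show "norm (zeta_tail n u \<alpha> * zeta_tail n v \<alpha>) \<le> T u n * T v n"
      unfolding norm_mult using assms
      by (intro mult_mono zeta_bound T_nonneg) auto
  qed
  also have "\<dots> = T u n * T v n" by (subst set_integral_const) auto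
  finally show ?thesis .
qed

lemma J_tendsto:
  assumes "x \<ge> 1" "Re u > 1" "Re v > 1"
  shows "(\<lambda>k. J_int (x + k) u v) \<longlonglongrightarrow> 0"
proof (rule tendsto_norm_zero_cancel, rule Lim_null_comparison)
  show "\<forall>\<^sub>F k in sequentially. norm (norm (J_int (x + k) u v)) \<le> T u (x + k) * T v (x + k)"
    using J_bound assms by (intro always_eventually) auto
  have "(\<lambda>k. T u (k + x) * T v (k + x)) \<longlonglongrightarrow> 0 * 0"
    by (intro tendsto_mult LIMSEQ_ignore_initial_segment[of _ 0, simplified] T_tendsto assms)
  then show "(\<lambda>k. T u (x + k) * T v (x + k)) \<longlonglongrightarrow> 0" by (simp add: add.commute)
qed



theorem mainTheorem7:
  fixes x :: nat and u v :: complex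
  assumes "x \<ge> 1" and "Re u > 1" and "Re v > 1"
  shows "set_integrable lborel {real x..}
           (\<lambda>\<alpha>. complex_of_real \<alpha> powr (- u) * zeta_tail 1 v \<alpha>)
       \<and> set_integrable lborel {real x..}
           (\<lambda>\<alpha>. complex_of_real \<alpha> powr (- v) * zeta_tail 1 u \<alpha>)
       \<and> J_int x u v =
           (of_nat x) powr (1 - u - v) / (u + v - 1)
           + (LINT \<alpha>:{real x..}|lborel. complex_of_real \<alpha> powr (- u) * zeta_tail 1 v \<alpha>)
           + (LINT \<alpha>:{real x..}|lborel. complex_of_real \<alpha> powr (- v) * zeta_tail 1 u \<alpha>)"
proof -
  define P where "P = (\<lambda>n::nat. complex_of_real (real n) powr (1 - (u + v)) / ((u + v) - 1))"
  define I where "I = (\<lambda>a b (n::nat). LINT \<beta>:{real n..}|lborel. g a b \<beta>)"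
  define D where "D = (\<lambda>n. J_int n u v - P n - I u v n - I v u n)"
  have w1: "u + v \<noteq> 1" using assms by (auto simp: complex_eq_iff)
  have step: "D n = D (Suc n)" if "n \<ge> 1" for n
  proof -
    have "J_int n u v = (LINT \<beta>:{real n..real n+1}|lborel. h u v \<beta>)
            + (LINT \<beta>:{real n..real n+1}|lborel. g u v \<beta>)
            + (LINT \<beta>:{real n..real n+1}|lborel. g v u \<beta>) + J_int (Suc n) u v"
      by (rule J_rec) (use that assms in auto)
    moreover have "(LINT \<beta>:{real n..real n+1}|lborel. h u v \<beta>) = P n - P (Suc n)"
      unfolding h_def P_def using powr_FTC[of "real n" "u + v"] that w1 by (simp add: add.commute)
    moreover have "I u v n = (LINT \<beta>:{real n..real n+1}|lborel. g u v \<beta>) + I u v (Suc n)"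
      unfolding I_def using g_split[of u v "real n"] that assms by (simp add: add.commute)
    moreover have "I v u n = (LINT \<beta>:{real n..real n+1}|lborel. g v u \<beta>) + I v u (Suc n)"
      unfolding I_def using g_split[of v u "real n"] that assms by (simp add: add.commute)
    ultimately show ?thesis unfolding D_def by (simp add: algebra_simps)
  qed
  have const: "D (x + k) = D x" for k
  proof (induction k)
    case (Suc k)
    then show ?case using step[of "x + k"] assms by simp
  qed simp
  have lim: "(\<lambda>k. D (x + k)) \<longlonglongrightarrow> 0 - 0 - 0 - 0"
    unfolding D_def
  proof (intro tendsto_diff)
    show "(\<lambda>k. J_int (x + k) u v) \<longlonglongrightarrow> 0" by (rule J_tendsto) (use assms in auto)
    have "P \<longlonglongrightarrow> 0" unfolding P_def
      using assms by (intro tendsto_divide_zero tendsto_neg_powr_complex_of_real filterlim_real_sequentially) auto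
    then show "(\<lambda>k. P (x + k)) \<longlonglongrightarrow> 0"
      using LIMSEQ_ignore_initial_segment[of P 0 x] by (simp add: add.commute)
    show "(\<lambda>k. I u v (x + k)) \<longlonglongrightarrow> 0"
      using g_tail_tendsto[of u v "real x"] assms unfolding I_def by simp
    show "(\<lambda>k. I v u (x + k)) \<longlonglongrightarrow> 0"
      using g_tail_tendsto[of v u "real x"] assms unfolding I_def by simp
  qed
  have "(\<lambda>k. D (x + k)) \<longlonglongrightarrow> D x" unfolding const by simp
  with lim have D0: "D x = 0" using LIMSEQ_unique by force
  have gi1: "set_integrable lborel {real x..} (g u v)" by (rule g_integrable) (use assms in auto)
  have gi2: "set_integrable lborel {real x..} (g v u)" by (rule g_integrable) (use assms in auto)
  have eq: "J_int x u v = P x + I u v x + I v u x" using D0 unfolding D_def by (simp add: algebra_simps)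
  have "1 - u - v = 1 - (u + v)" by simp
  show ?thesis
    using gi1 gi2 eq unfolding g_def[abs_def] I_def P_def
    by (simp add: diff_diff_eq)
qed

end
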